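(* For integers $N\ge 1$ and $n\ge 1$, $$B_{N,n}=n!\sum_{k=1}^{n}\ \sum_{\substack{i_1+\cdots+i_k=n\\ i_1,\dots,i_k\ge 1}}\frac{(-N!)^k}{(N+i_1)!\cdots(N+i_k)!},$$ where the inner sum runs over all $k$-tuples of positive integers $(i_1,\dots,i_k)$ with sum $n$.
   Context: For a positive integer $N$, the hypergeometric Bernoulli numbers $B_{N,n}$ ($n\ge 0$) are defined by $$\frac{x^N/N!}{e^x-\sum_{n=0}^{N-1}x^n/n!}=\sum_{n=0}^\infty B_{N,n}\frac{x^n}{n!}.$$ *)

theory Defs
  imports "HOL-Computational_Algebra.Formal_Power_Series"
begin

definition hyp_bernoulli_gf :: "nat \<Rightarrow> real fps" where
  "hyp_bernoulli_gf N =
     (fps_const (1 / fact N) * fps_X ^ N) /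
     (fps_exp 1 - (\<Sum>m<N. fps_const (1 / fact m) * fps_X ^ m))"

definition hyp_bernoulli :: "nat \<Rightarrow> nat \<Rightarrow> real" where
  "hyp_bernoulli N n = fact n * fps_nth (hyp_bernoulli_gf N) n"

definition compositions :: "nat \<Rightarrow> nat \<Rightarrow> nat list set" where
  "compositions n k = {is. length is = k \<and> (\<forall>i\<in>set is. 1 \<le> i) \<and> sum_list is = n}"

end

theory Submission
  imports Defs
begin

definition Tc :: "(nat \<Rightarrow> real) \<Rightarrow> nat \<Rightarrow> nat \<Rightarrow> real" where
  "Tc c n k = (\<Sum>is\<in>compositions n k. prod_list (map c is))"

lemma len_le_sum: "\<forall>i\<in>set xs. (1::nat) \<le> i \<Longrightarrow> length xs \<le> sum_list xs"
  by (induction xs) auto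

lemma comp_finite: "finite (compositions n k)"
proof -
  have "compositions n k \<subseteq> {xs. set xs \<subseteq> {0..n} \<and> length xs = k}"
    by (auto simp: compositions_def member_le_sum_list)
  moreover have "finite {xs. set xs \<subseteq> {0..n} \<and> length xs = k}"
    by (rule finite_lists_length_eq) simp
  ultimately show ?thesis by (rule finite_subset)
qed

lemma comp_0: "compositions n 0 = (if n = 0 then {[]} else {})"
  by (auto simp: compositions_def)

lemma comp_empty: "n < k \<Longrightarrow> compositions n k = {}"
  using len_le_sum by (fastforce simp: compositions_def)

lemma comp_Suc: "compositions n (Suc k) = (\<Union>j\<in>{1..n}. (#) j ` compositions (n-j) k)"
proof
  show "compositions n (Suc k) \<subseteq> (\<Union>j\<in>{1..n}. (#) j ` compositions (n-j) k)"
  proof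
    fix xs assume "xs \<in> compositions n (Suc k)"
    then obtain j ys where xs: "xs = j # ys" "length ys = k" "1 \<le> j" "\<forall>i\<in>set ys. 1 \<le> i"
      "j + sum_list ys = n"
      by (auto simp: compositions_def length_Suc_conv)
    then have "ys \<in> compositions (n-j) k" "j \<in> {1..n}" by (auto simp: compositions_def)
    then show "xs \<in> (\<Union>j\<in>{1..n}. (#) j ` compositions (n-j) k)"
      using xs(1) by blast
  qed
next
  show "(\<Union>j\<in>{1..n}. (#) j ` compositions (n-j) k) \<subseteq> compositions n (Suc k)"
    by (auto simp: compositions_def)
qed

lemma Tc_Suc: "Tc c n (Suc k) = (\<Sum>j=1..n. c j * Tc c (n-j) k)"
proof -
  have "Tc c n (Suc k) = (\<Sum>j\<in>{1..n}. \<Sum>is\<in>(#) j ` compositions (n-j) k. prod_list (map c is))"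
    unfolding Tc_def comp_Suc
    by (rule sum.UNION_disjoint) (auto simp: comp_finite)
  also have "\<dots> = (\<Sum>j=1..n. c j * Tc c (n-j) k)"
    by (rule sum.cong) (auto simp: sum.reindex Tc_def sum_distrib_left)
  finally show ?thesis .
qed

lemma power_nth_Tc:
  assumes "c 0 = 0"
  shows "fps_nth (Abs_fps c ^ k) n = Tc c n k"
proof (induction k arbitrary: n)
  case 0
  then show ?case by (auto simp: Tc_def comp_0)
next
  case (Suc k)
  have "fps_nth (Abs_fps c ^ Suc k) n = (\<Sum>i=0..n. c i * Tc c (n-i) k)"
    by (simp add: fps_mult_nth Suc)
  also have "\<dots> = (\<Sum>i=1..n. c i * Tc c (n-i) k)"
    using assms by (simp add: sum.atLeast_Suc_atMost)
  finally show ?case by (simp add: Tc_Suc)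
qed

lemma geo_gen: "(1 - (x::'a::comm_ring_1)) * (\<Sum>k\<le>m. x ^ k) = 1 - x ^ Suc m"
proof (induction m)
  case (Suc m)
  have "(1 - x) * (\<Sum>k\<le>Suc m. x ^ k) = (1 - x) * (\<Sum>k\<le>m. x ^ k) + (1 - x) * x ^ Suc m"
    by (simp add: algebra_simps)
  also have "\<dots> = 1 - x ^ Suc (Suc m)" using Suc by (simp add: algebra_simps)
  finally show ?case .
qed simp

theorem proposition2:
  fixes N n :: nat
  assumes "N \<ge> 1" and "n \<ge> 1"
  shows "hyp_bernoulli N n =
    fact n * (\<Sum>k=1..n. \<Sum>is\<in>compositions n k.
       (- fact N) ^ k / (\<Prod>i\<leftarrow>is. fact (N + i)))"
proof -
  define d :: "nat \<Rightarrow> real" where "d j = (if j = 0 then 0 else - (fact N / fact (N+j)))" for j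
  define G where "G = Abs_fps d"
  define F :: "real fps" where "F = Abs_fps (\<lambda>j. 1 / fact (N+j))"
  have F1: "fps_const (fact N) * F = 1 - G"
    by (rule fps_ext) (simp add: F_def G_def d_def)
  have D: "fps_exp 1 - (\<Sum>m<N. fps_const (1 / fact m) * fps_X ^ m) = fps_X ^ N * F"
  proof (rule fps_ext)
    fix m
    show "fps_nth (fps_exp 1 - (\<Sum>m<N. fps_const (1 / fact m) * fps_X ^ m)) m = fps_nth (fps_X ^ N * (F::real fps)) m"
      by (simp add: fps_X_power_mult_nth F_def fps_sum_nth if_distrib[of "\<lambda>x. x / _"] sum.delta cong: if_cong)
  qed
  define H where "H = inverse (fps_const (fact N) * F)"
  have F0: "fps_nth (fps_const (fact N) * F) 0 \<noteq> 0" by (simp add: F_def)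
  have HF: "H * (fps_const (fact N) * F) = 1"
    unfolding H_def using F0 by (simp add: inverse_mult_eq_1)
  have XF: "fps_X ^ N * F \<noteq> (0::real fps)"
  proof
    assume "fps_X ^ N * F = 0"
    hence "fps_nth (fps_X ^ N * F) N = 0" by simp
    thus False by (simp add: fps_X_power_mult_nth F_def)
  qed
  have num: "fps_const (1 / fact N) * fps_X ^ N = (fps_X ^ N * F) * H"
  proof -
    have "(fps_X ^ N * F) * H = fps_X ^ N * fps_const (1 / fact N) * (H * (fps_const (fact N) * F))"
      by (simp add: fps_const_mult[symmetric] algebra_simps)
    also have "\<dots> = fps_const (1 / fact N) * fps_X ^ N" by (simp add: HF)
    finally show ?thesis by simp
  qed
  have gf: "hyp_bernoulli_gf N = H"
    unfolding hyp_bernoulli_gf_def D num using XF by simp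
  have HG: "H * (1 - G) = 1" using HF F1 by simp
  have geo: "(1 - G) * (\<Sum>k\<le>n. G ^ k) = 1 - G ^ Suc n"
    by (rule geo_gen)
  have "(\<Sum>k\<le>n. G ^ k) = H * (1 - G) * (\<Sum>k\<le>n. G ^ k)" using HG by simp
  also have "\<dots> = H * ((1 - G) * (\<Sum>k\<le>n. G ^ k))" by (simp only: mult.assoc)
  also have "\<dots> = H - H * G ^ Suc n" by (simp only: geo right_diff_distrib mult_1_right)
  finally have S: "(\<Sum>k\<le>n. G ^ k) = H - H * G ^ Suc n" .
  have d0: "d 0 = 0" by (simp add: d_def)
  have z: "fps_nth (H * G ^ Suc n) n = 0"
  proof -
    have "\<And>i. i \<le> n \<Longrightarrow> fps_nth (G ^ Suc n) i = 0"
      unfolding G_def power_nth_Tc[of d, OF d0] Tc_def using comp_empty by simp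
    hence "\<And>i. i \<in> {0..n} \<Longrightarrow> fps_nth H i * fps_nth (G ^ Suc n) (n - i) = 0" by simp
    thus ?thesis unfolding fps_mult_nth by (intro sum.neutral) blast
  qed
  have "fps_nth H n = (\<Sum>k\<le>n. fps_nth (G ^ k) n)"
    using arg_cong[OF S, of "\<lambda>f. fps_nth f n"] z by (simp add: fps_sum_nth)
  also have "\<dots> = (\<Sum>k\<le>n. Tc d n k)" unfolding G_def power_nth_Tc[of d, OF d0] ..
  also have "\<dots> = (\<Sum>k=1..n. Tc d n k)"
  proof -
    have "{..n} = insert 0 {1..n}" by auto
    moreover have "Tc d n 0 = 0" using assms by (simp add: Tc_def comp_0)
    ultimately show ?thesis by simp
  qed
  also have "\<dots> = (\<Sum>k=1..n. \<Sum>is\<in>compositions n k.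
       (- fact N) ^ k / (\<Prod>i\<leftarrow>is. fact (N + i)))"
  proof (rule sum.cong[OF refl], unfold Tc_def, rule sum.cong[OF refl])
    fix k xs assume "xs \<in> compositions n k"
    hence xs: "length xs = k" "\<forall>i\<in>set xs. 1 \<le> i" by (auto simp: compositions_def)
    have "prod_list (map d xs) = (- fact N) ^ length xs / (\<Prod>i\<leftarrow>xs. fact (N + i))"
      using xs(2) by (induction xs) (auto simp: d_def)
    thus "prod_list (map d xs) = (- fact N) ^ k / (\<Prod>i\<leftarrow>xs. fact (N + i))" using xs by simp
  qed
  finally show ?thesis unfolding hyp_bernoulli_def gf by simp
qed

end
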